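(* Let $m/n\in(0,1/2)$, $\mathrm{LFS}(m/n)=(0=u_1/v_1,\dots,u_\alpha/v_\alpha)$, and let the elements of $\mathcal A_{m/n}$ be $0=k_1<k_2<\cdots<k_\alpha=m-1$. Then $\#\mathcal O_{m/n}[k_i,0]=v_i$ for each $i$. In particular, the elements of $\mathcal A_{m/n}$ appear in decreasing order along the orbit segment $\mathcal O_{m/n}[m,0]$.
   Context: Rationals in lowest terms. $\mathrm{LFP}(h/k)$ is the element immediately preceding $h/k$ in the increasing list of rationals in $[0,1/2]$ with denominator at most $k$; $\mathrm{LFS}(m/n)=(0=u_1/v_1,\dots,u_\alpha/v_\alpha)$ with $u_\alpha/v_\alpha=\mathrm{LFP}(m/n)$ and $u_i/v_i=\mathrm{LFP}(u_{i+1}/v_{i+1})$. $+_n$ is addition mod $n$; $\mathcal O_{m/n}[r,s]=\{r+_njm\colon0\le j\le K\}$ with $K\ge0$ least such that $r+_nKm=s$ (an orbit segment ordered by $j$). $k\in[0,m-1]$ is $m/n$-admissible if $\{k+1,\dots,m-1\}\cap\mathcal O_{m/n}[k,0]=\emptyset$; $\mathcal A_{m/n}$ is the set of such $k$ (it has exactly $\alpha$ elements, including $0$ and $m-1$). *)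

theory Defs
  imports Main "HOL.Rat"
begin

definition denom :: "rat \<Rightarrow> int" where
  "denom q = snd (quotient_of q)"

definition LFP :: "rat \<Rightarrow> rat" where
  "LFP q = Max {x. 0 \<le> x \<and> x \<le> 1/2 \<and> denom x \<le> denom q \<and> x < q}"

(* us is LFS(q) = (u_1,...,u_alpha) as a list (0-indexed):
   u_1 = 0, u_alpha = LFP q, u_i = LFP u_{i+1}, and the iteration stops
   at the first time 0 is reached. *)
definition is_LFS :: "rat \<Rightarrow> rat list \<Rightarrow> bool" where
  "is_LFS q us \<longleftrightarrow> us \<noteq> [] \<and> hd us = 0 \<and> last us = LFP q \<and>
     (\<forall>i. Suc i < length us \<longrightarrow> us ! i = LFP (us ! Suc i)) \<and>
     0 \<notin> set (tl us)"

definition orbK :: "nat \<Rightarrow> nat \<Rightarrow> nat \<Rightarrow> nat \<Rightarrow> nat" where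
  "orbK m n r s = (LEAST K. (r + K * m) mod n = s)"

definition orb_list :: "nat \<Rightarrow> nat \<Rightarrow> nat \<Rightarrow> nat \<Rightarrow> nat list" where
  "orb_list m n r s = map (\<lambda>j. (r + j * m) mod n) [0..<Suc (orbK m n r s)]"

definition orb :: "nat \<Rightarrow> nat \<Rightarrow> nat \<Rightarrow> nat \<Rightarrow> nat set" where
  "orb m n r s = set (orb_list m n r s)"

definition admissible :: "nat \<Rightarrow> nat \<Rightarrow> nat \<Rightarrow> bool" where
  "admissible m n k \<longleftrightarrow> k \<le> m - 1 \<and> {k+1..m-1} \<inter> orb m n k 0 = {}"

definition adm_set :: "nat \<Rightarrow> nat \<Rightarrow> nat set" where
  "adm_set m n = {k. admissible m n k}"

end

theory Submission
  imports Defs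
begin


definition numr :: "rat \<Rightarrow> int" where "numr q = fst (quotient_of q)"

lemma denom_pos: "denom x > 0"
  unfolding denom_def using quotient_of_denom_pos' by blast

lemma rat_repr: "x = of_int (numr x) / of_int (denom x)"
  unfolding numr_def denom_def by (rule quotient_of_div) simp

lemma coprime_nd: "coprime (numr x) (denom x)"
  unfolding numr_def denom_def by (rule quotient_of_coprime) simp

lemma rat_less_iff: "b > 0 \<Longrightarrow> d > 0 \<Longrightarrow>
  (of_int a / of_int b < (of_int c / of_int d :: rat)) \<longleftrightarrow> a*d < c*b"
proof -
  assume "b > 0" "d > 0"
  then have "(of_int a / of_int b < (of_int c / of_int d :: rat)) \<longleftrightarrow> of_int a * of_int d < (of_int c * of_int b :: rat)"
    by (simp add: field_simps)
  also have "\<dots> \<longleftrightarrow> a*d < c*b" by (metis of_int_less_iff of_int_mult)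
  finally show ?thesis .
qed

lemma rat_le_iff: "b > 0 \<Longrightarrow> d > 0 \<Longrightarrow>
  (of_int a / of_int b \<le> (of_int c / of_int d :: rat)) \<longleftrightarrow> a*d \<le> c*b"
  by (meson linorder_not_less rat_less_iff)

lemma rat_eq_iff: "b > 0 \<Longrightarrow> d > 0 \<Longrightarrow>
  (of_int a / of_int b = (of_int c / of_int d :: rat)) \<longleftrightarrow> a*d = c*b"
  using rat_le_iff[of b d a c] rat_le_iff[of d b c a] by (auto simp: mult.commute)

lemma denom_le: assumes "b > 0" shows "denom (of_int a / of_int b) \<le> b"
proof -
  let ?x = "of_int a / of_int b :: rat"
  have e: "?x = of_int (numr ?x) / of_int (denom ?x)" by (rule rat_repr)
  have "a * denom ?x = numr ?x * b" using rat_eq_iff[OF assms denom_pos] e by metis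
  then have "denom ?x dvd numr ?x * b" by (metis dvd_triv_right)
  then have "denom ?x dvd b" using coprime_nd
    by (metis coprime_commute coprime_dvd_mult_right_iff)
  then show ?thesis using assms by (simp add: zdvd_imp_le)
qed

lemma denom_eq: assumes "b > 0" "coprime a b" shows "denom (of_int a / of_int b) = b"
proof -
  let ?x = "of_int a / of_int b :: rat"
  have e: "?x = of_int (numr ?x) / of_int (denom ?x)" by (rule rat_repr)
  have "a * denom ?x = numr ?x * b" using rat_eq_iff[OF assms(1) denom_pos] e by metis
  then have "b dvd a * denom ?x" by (metis dvd_triv_right)
  then have "b dvd denom ?x" using assms(2)
    by (metis coprime_commute coprime_dvd_mult_right_iff)
  then have "b \<le> denom ?x" using denom_pos zdvd_imp_le by blast
  with denom_le[OF assms(1), of a] show ?thesis by simp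
qed

lemma denom_0: "denom 0 = 1"
  unfolding denom_def by simp

lemma numr_nonneg: "x \<ge> 0 \<Longrightarrow> numr x \<ge> 0"
proof -
  assume "x \<ge> 0"
  then have "of_int 0 / of_int 1 \<le> (of_int (numr x) / of_int (denom x) :: rat)" using rat_repr by simp
  then have "0 * denom x \<le> numr x * 1" using rat_le_iff[of 1 "denom x" 0 "numr x"] denom_pos[of x] by linarith
  then show ?thesis by simp
qed



definition LS :: "rat \<Rightarrow> rat set" where
  "LS q = {x. 0 \<le> x \<and> x \<le> 1/2 \<and> denom x \<le> denom q \<and> x < q}"

lemma LS_finite: "finite (LS q)"
proof -
  let ?B = "denom q"
  have "LS q \<subseteq> (\<lambda>(a,b). of_int a / of_int b) ` ({0..?B} \<times> {1..?B})"
  proof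
    fix x assume x: "x \<in> LS q"
    have b: "denom x > 0" "denom x \<le> ?B" using x denom_pos unfolding LS_def by auto
    have a0: "numr x \<ge> 0" using x numr_nonneg unfolding LS_def by auto
    have "of_int (numr x) / of_int (denom x) \<le> (of_int 1 / of_int 2 :: rat)"
      using x rat_repr[of x] unfolding LS_def by simp
    then have "numr x * 2 \<le> 1 * denom x" using rat_le_iff[of "denom x" 2] b by simp
    then have "numr x \<le> ?B" using b by linarith
    then show "x \<in> (\<lambda>(a,b). of_int a / of_int b) ` ({0..?B} \<times> {1..?B})"
      using a0 b rat_repr[of x] by (intro image_eqI[of _ _ "(numr x, denom x)"]) auto
  qed
  then show ?thesis by (rule finite_subset) auto
qed

lemma LFP_props:
  assumes "0 < q"
  shows "0 \<le> LFP q" "LFP q \<le> 1/2" "denom (LFP q) \<le> denom q" "LFP q < q"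
    "\<And>x. 0 \<le> x \<Longrightarrow> x \<le> 1/2 \<Longrightarrow> denom x \<le> denom q \<Longrightarrow> x < q \<Longrightarrow> x \<le> LFP q"
proof -
  have e: "LFP q = Max (LS q)" unfolding LFP_def LS_def by simp
  have ne: "0 \<in> LS q" using assms denom_pos[of q] unfolding LS_def by (simp add: denom_0)
  have "LFP q \<in> LS q" unfolding e using LS_finite ne by (intro Max_in) auto
  then show "0 \<le> LFP q" "LFP q \<le> 1/2" "denom (LFP q) \<le> denom q" "LFP q < q"
    unfolding LS_def by auto
  show "\<And>x. 0 \<le> x \<Longrightarrow> x \<le> 1/2 \<Longrightarrow> denom x \<le> denom q \<Longrightarrow> x < q \<Longrightarrow> x \<le> LFP q"
    unfolding e using LS_finite by (intro Max_ge) (auto simp: LS_def)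
qed

lemma LFP_denom_less:
  assumes "0 < q" "q \<le> 1/2"
  shows "denom (LFP q) < denom q"
proof (rule ccontr)
  assume "\<not> ?thesis"
  then have eq: "denom (LFP q) = denom q" using LFP_props(3)[OF assms(1)] by simp
  define b where "b = denom q"
  define a where "a = numr q"
  define c where "c = numr (LFP q)"
  have bp: "b > 0" unfolding b_def by (rule denom_pos)
  have qr: "q = of_int a / of_int b" unfolding a_def b_def by (rule rat_repr)
  have Lr: "LFP q = of_int c / of_int b" unfolding c_def b_def eq[symmetric] by (rule rat_repr)
  have "c * b < a * b" using LFP_props(4)[OF assms(1)] qr Lr rat_less_iff[OF bp bp] by simp
  then have ca: "c < a" using bp by simp
  have c0: "c \<ge> 0" unfolding c_def using LFP_props(1)[OF assms(1)] by (rule numr_nonneg)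
  have "a * 2 \<le> 1 * b" using assms(2) qr rat_le_iff[OF bp, of 2 a 1] by simp
  then have ab: "2 * a \<le> b" by simp
  have c1: "c \<ge> 1"
  proof (rule ccontr)
    assume "\<not> c \<ge> 1"
    then have "c = 0" using c0 by simp
    then have "LFP q = 0" using Lr by simp
    then have "b = 1" using eq denom_0 b_def by simp
    then show False using ab ca c0 by simp
  qed
  have b2: "b \<ge> 2" using ab ca c0 by simp
  define x where "x = (of_int c / of_int (b - 1) :: rat)"
  have bm: "b - 1 > 0" using b2 by simp
  have "c * b < a * (b - 1)"
  proof -
    have "(c + 1) * (b - 1) \<le> a * (b - 1)" using ca bm by (intro mult_right_mono) auto
    moreover have "(c + 1) * (b - 1) = c * b + (b - c - 1)" by (simp add: algebra_simps)
    moreover have "c + 1 < b" using ab ca c0 by linarith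
    ultimately show ?thesis by linarith
  qed
  then have xq: "x < q" unfolding x_def qr using rat_less_iff[OF bm bp] by simp
  have "c * b > c * (b - 1)" using c1 by (simp add: algebra_simps)
  then have xL: "LFP q < x" unfolding x_def Lr using rat_less_iff[OF bp bm] by simp
  have x0: "x \<ge> 0" unfolding x_def using c0 bm by simp
  have "denom x \<le> b - 1" unfolding x_def by (rule denom_le[OF bm])
  then have "x \<le> LFP q" using LFP_props(5)[OF assms(1) x0 _ _ xq] xq assms(2) b_def by simp
  with xL show False by simp
qed



lemma mod_cancel_int: "(a + c) mod n = (b + c) mod n \<Longrightarrow> a mod n = b mod (n::int)"
  by (metis add_diff_cancel_right' mod_diff_left_eq)

lemma mod_cancel_nat: "(a + c) mod n = (b + c) mod n \<Longrightarrow> a mod n = b mod (n::nat)"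
proof -
  assume "(a + c) mod n = (b + c) mod n"
  then have "int ((a + c) mod n) = int ((b + c) mod n)" by simp
  then have "(int a + int c) mod int n = (int b + int c) mod int n" by (simp add: zmod_int)
  then have "int a mod int n = int b mod int n" by (rule mod_cancel_int)
  then show ?thesis by (simp add: zmod_int[symmetric])
qed

locale mn =
  fixes m n :: nat
  assumes m0: "0 < m" and mn2: "2 * m < n" and cop: "coprime m n"
begin

lemma mlt: "m < n" using mn2 m0 by linarith

lemma cop': "coprime n m" using cop by (simp add: coprime_commute)

lemma inj_orb: assumes "i < n" "j < n" "(x + i*m) mod n = (x + j*m) mod n" shows "i = j"
proof -
  have key: "i = j" if "i \<le> j" "j < n" "(x + i*m) mod n = (x + j*m) mod n" for i j
  proof -
    have "(x + j*m) mod n = (x + i*m) mod n" using that by simp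
    then have "n dvd (x + j*m) - (x + i*m)" using mod_eq_dvd_iff_nat that(1) by (simp add: mult_le_mono1)
    moreover have "(x + j*m) - (x + i*m) = (j - i) * m" by (simp add: diff_mult_distrib)
    ultimately have "n dvd (j - i) * m" by simp
    then have "n dvd (j - i)" using coprime_dvd_mult_left_iff[OF cop'] by simp
    moreover have "j - i < n" using that by simp
    ultimately have "j - i = 0" using dvd_imp_le by fastforce
    then show ?thesis using that by simp
  qed
  show ?thesis
    using key[of i j] key[of j i] assms by (cases "i \<le> j") auto
qed

lemma orb_exists: "\<exists>K<n. (x + K*m) mod n = 0"
proof -
  let ?f = "\<lambda>j. (x + j*m) mod n"
  have inj: "inj_on ?f {..<n}"
  proof (rule inj_onI)
    fix i j assume "i \<in> {..<n}" "j \<in> {..<n}" "?f i = ?f j"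
    then show "i = j" using inj_orb by blast
  qed
  have sub: "?f ` {..<n} \<subseteq> {..<n}" using mlt by auto
  have "?f ` {..<n} = {..<n}" using endo_inj_surj[OF _ sub inj] by simp
  moreover have "0 \<in> {..<n}" using mlt by simp
  ultimately have "0 \<in> ?f ` {..<n}" by simp
  then obtain K where "K \<in> {..<n}" "?f K = 0" by (auto simp: image_iff)
  then show ?thesis by auto
qed

definition Kf :: "nat \<Rightarrow> nat" where "Kf x = orbK m n x 0"

lemma Kf_spec: "(x + Kf x * m) mod n = 0"
proof -
  have "\<exists>K. (x + K*m) mod n = 0" using orb_exists[of x] by (elim exE conjE) (rule exI)
  then show ?thesis unfolding Kf_def orbK_def by (rule LeastI_ex)
qed

lemma Kf_lt: "Kf x < n"
proof -
  obtain K where "K < n" "(x + K*m) mod n = 0" using orb_exists[of x] by (elim exE conjE)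
  then have "Kf x \<le> K" unfolding Kf_def orbK_def by (intro Least_le) simp
  then show ?thesis using \<open>K < n\<close> by simp
qed

lemma Kf_unique: "j < n \<Longrightarrow> (x + j*m) mod n = 0 \<Longrightarrow> Kf x = j"
  using inj_orb[OF Kf_lt, of j x] Kf_spec by simp

lemma Kf_le: "(x + j*m) mod n = 0 \<Longrightarrow> Kf x \<le> j"
  unfolding Kf_def orbK_def by (intro Least_le) simp

lemma card_orb: "card (orb m n x 0) = Kf x + 1"
proof -
  have inj: "inj_on (\<lambda>j. (x + j*m) mod n) (set [0..<Suc (Kf x)])"
  proof (rule inj_onI)
    fix i j assume "i \<in> set [0..<Suc (Kf x)]" "j \<in> set [0..<Suc (Kf x)]"
      "(x + i*m) mod n = (x + j*m) mod n"
    then have "i < n" "j < n" using Kf_lt[of x] by auto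
    then show "i = j" using inj_orb[of i j x] \<open>(x + i*m) mod n = (x + j*m) mod n\<close> by simp
  qed
  have "distinct (orb_list m n x 0)"
    unfolding orb_list_def distinct_map Kf_def[symmetric] using inj by simp
  then have "card (set (orb_list m n x 0)) = length (orb_list m n x 0)" by (rule distinct_card)
  then show ?thesis unfolding orb_def by (simp add: orb_list_def Kf_def)
qed

lemma orb_mem: "y \<in> orb m n x 0 \<longleftrightarrow> (\<exists>j \<le> Kf x. y = (x + j*m) mod n)"
  unfolding orb_def orb_list_def Kf_def[symmetric] set_map set_upt image_iff
  by (metis atLeastLessThan_iff le_imp_less_Suc less_Suc_eq_le zero_le)

definition D :: "nat \<Rightarrow> nat" where "D v = (v*m) mod n"

lemma A3: assumes "k < m" shows "D (Kf k + 1) = m - k" "Kf k + 1 < n"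
proof -
  let ?K = "Kf k"
  obtain q where q: "k + ?K*m = n*q" using Kf_spec[of k] by (metis dvd_def mod_0_imp_dvd)
  have "(?K+1)*m = n*q + (m - k)" using q assms by (simp add: algebra_simps)
  then have "((?K+1)*m) mod n = (m - k) mod n" by simp
  also have "\<dots> = m - k" using mlt by simp
  finally show d: "D (Kf k + 1) = m - k" unfolding D_def .
  show "Kf k + 1 < n"
  proof (rule ccontr)
    assume "\<not> ?thesis"
    then have "Kf k + 1 = n" using Kf_lt[of k] by simp
    then have "D (Kf k + 1) = 0" unfolding D_def by simp
    then show False using d assms by simp
  qed
qed

lemma A4: assumes "1 \<le> v" "v < n" "1 \<le> D v" "D v \<le> m" shows "Kf (m - D v) = v - 1"
proof (rule Kf_unique)
  show "v - 1 < n" using assms by simp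
  have "m - D v + (v-1)*m = v*m - D v" using assms by (cases v) (auto simp: algebra_simps)
  also have "\<dots> = n * (v*m div n)" unfolding D_def by (metis minus_mod_eq_mult_div)
  finally show "(m - D v + (v - 1) * m) mod n = 0" by simp
qed

lemma D_pos: assumes "1 \<le> v" "v < n" shows "1 \<le> D v"
proof (rule ccontr)
  assume "\<not> ?thesis"
  then have "(v*m) mod n = 0" unfolding D_def by simp
  then have "n dvd v*m" by (rule mod_0_imp_dvd)
  then have "n dvd v" using coprime_dvd_mult_left_iff[OF cop'] by simp
  then show False using assms by (auto dest: dvd_imp_le)
qed

lemma A5: assumes "k < m"
  shows "admissible m n k \<longleftrightarrow> (\<forall>y. k < y \<and> y < m \<longrightarrow> Kf k < Kf y)"
proof
  assume adm: "admissible m n k"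
  show "\<forall>y. k < y \<and> y < m \<longrightarrow> Kf k < Kf y"
  proof (intro allI impI, rule ccontr)
    fix y assume y: "k < y \<and> y < m" and "\<not> Kf k < Kf y"
    then have le: "Kf y \<le> Kf k" by simp
    have "((k + (Kf k - Kf y)*m) + Kf y * m) mod n = (y + Kf y * m) mod n"
    proof -
      have "(k + (Kf k - Kf y)*m) + Kf y * m = k + Kf k * m" using le
      proof -
        have "(k + (Kf k - Kf y)*m) + Kf y * m = k + ((Kf k - Kf y) + Kf y)*m"
          by (simp add: add_mult_distrib)
        also have "(Kf k - Kf y) + Kf y = Kf k" using le by simp
        finally show ?thesis .
      qed
      then show ?thesis using Kf_spec[of k] Kf_spec[of y] by (simp only:)
    qed
    then have "(k + (Kf k - Kf y)*m) mod n = y mod n" by (rule mod_cancel_nat)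
    then have "y \<in> orb m n k 0" using y mlt by (auto simp: orb_mem intro!: exI[of _ "Kf k - Kf y"])
    moreover have "y \<in> {k+1..m-1}" using y by auto
    ultimately show False using adm unfolding admissible_def by blast
  qed
next
  assume H: "\<forall>y. k < y \<and> y < m \<longrightarrow> Kf k < Kf y"
  show "admissible m n k" unfolding admissible_def
  proof (intro conjI)
    show "k \<le> m - 1" using assms by simp
    show "{k + 1..m - 1} \<inter> orb m n k 0 = {}"
    proof (rule ccontr)
      assume "\<not> ?thesis"
      then obtain y where y0: "y \<in> {k+1..m-1}" "y \<in> orb m n k 0" by blast
      then have y: "k < y" "y < m" "y \<in> orb m n k 0" using assms by auto
      then obtain j where j: "j \<le> Kf k" "y = (k + j*m) mod n" by (auto simp: orb_mem)
      have "(y + (Kf k - j)*m) mod n = (k + j*m + (Kf k - j)*m) mod n"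
        using j by (simp add: mod_add_left_eq)
      also have "k + j*m + (Kf k - j)*m = k + Kf k * m" using j by (simp add: algebra_simps diff_mult_distrib)
      finally have "(y + (Kf k - j)*m) mod n = 0" using Kf_spec by simp
      then have "Kf y \<le> Kf k - j" by (rule Kf_le)
      then show False using H y by fastforce
    qed
  qed
qed

end


context mn begin

definition recN :: "nat \<Rightarrow> bool" where
  "recN v \<longleftrightarrow> 1 \<le> v \<and> v < n \<and> (\<forall>w. 1 \<le> w \<longrightarrow> w < v \<longrightarrow> D v < D w)"

lemma adm_lt: "k \<in> adm_set m n \<Longrightarrow> k < m"
  unfolding adm_set_def admissible_def using m0 by auto

lemma SV1: assumes "k \<in> adm_set m n" shows "recN (Kf k + 1)"
proof -
  have km: "k < m" using adm_lt[OF assms] .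
  have adm: "\<forall>y. k < y \<and> y < m \<longrightarrow> Kf k < Kf y"
    using assms A5[OF km] unfolding adm_set_def by auto
  have Dv: "D (Kf k + 1) = m - k" and vn: "Kf k + 1 < n" using A3[OF km] by auto
  have "D (Kf k + 1) < D w" if w: "1 \<le> w" "w < Kf k + 1" for w
  proof (rule ccontr)
    assume "\<not> ?thesis"
    then have le: "D w \<le> m - k" using Dv by simp
    have wn: "w < n" using w vn by simp
    have d1: "1 \<le> D w" using D_pos[OF w(1) wn] .
    have Kw: "Kf (m - D w) = w - 1" using A4[OF w(1) wn d1] le by simp
    show False
    proof (cases "m - D w = k")
      case True
      then show ?thesis using Kw w by simp
    next
      case False
      then have "k < m - D w" "m - D w < m" using le d1 km by auto
      then have "Kf k < Kf (m - D w)" using adm by blast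
      then show ?thesis using Kw w by simp
    qed
  qed
  then show ?thesis unfolding recN_def using vn by auto
qed

lemma SV2: assumes "recN v" shows "m - D v \<in> adm_set m n" "Kf (m - D v) + 1 = v"
proof -
  have v1: "1 \<le> v" and vn: "v < n" and rec: "\<And>w. 1 \<le> w \<Longrightarrow> w < v \<Longrightarrow> D v < D w"
    using assms unfolding recN_def by auto
  have D1: "D 1 = m" unfolding D_def using mlt by simp
  have Dm: "D v \<le> m"
  proof (cases "v = 1")
    case True then show ?thesis using D1 by simp
  next
    case False then have "D v < D 1" using rec v1 by simp
    then show ?thesis using D1 by simp
  qed
  have Dp: "1 \<le> D v" by (rule D_pos[OF v1 vn])
  have Kk: "Kf (m - D v) = v - 1" by (rule A4[OF v1 vn Dp Dm])
  then show "Kf (m - D v) + 1 = v" using v1 by simp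
  let ?k = "m - D v"
  have km: "?k < m" using Dp m0 by simp
  have "\<forall>y. ?k < y \<and> y < m \<longrightarrow> Kf ?k < Kf y"
  proof (intro allI impI, rule ccontr)
    fix y assume y: "?k < y \<and> y < m" and "\<not> Kf ?k < Kf y"
    then have le: "Kf y \<le> Kf ?k" by simp
    have Dw: "D (Kf y + 1) = m - y" using A3 y by simp
    have "D (Kf y + 1) < D v" using Dw y Dm by linarith
    moreover have "Kf y + 1 \<le> v" using le Kk v1 by simp
    ultimately have "Kf y + 1 < v" by (metis nat_less_le)
    then have "D v < D (Kf y + 1)" using rec by simp
    with \<open>D (Kf y + 1) < D v\<close> show False by simp
  qed
  then show "m - D v \<in> adm_set m n" unfolding adm_set_def using A5[OF km] by simp
qed

lemma Kmono: assumes "k1 \<in> adm_set m n" "k2 \<in> adm_set m n" "k1 < k2" shows "Kf k1 < Kf k2"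
proof -
  have "k1 < m" "k2 < m" using adm_lt assms by auto
  then show ?thesis using assms A5[of k1] unfolding adm_set_def by auto
qed

lemma adm_finite: "finite (adm_set m n)"
  by (rule finite_subset[of _ "{..<m}"]) (auto dest: adm_lt)

lemma adm_image: "(\<lambda>k. Kf k + 1) ` adm_set m n = {v. recN v}"
proof
  show "(\<lambda>k. Kf k + 1) ` adm_set m n \<subseteq> {v. recN v}" using SV1 by auto
  show "{v. recN v} \<subseteq> (\<lambda>k. Kf k + 1) ` adm_set m n"
  proof
    fix v assume "v \<in> {v. recN v}"
    then have "recN v" by simp
    then show "v \<in> (\<lambda>k. Kf k + 1) ` adm_set m n"
      using SV2[of v] by (metis image_eqI)
  qed
qed

end


context mn begin

definition q0 :: rat where "q0 = of_nat m / of_nat n"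

lemma q0_int: "q0 = of_int (int m) / of_int (int n)" unfolding q0_def by simp

lemma npos: "int n > 0" using mlt by simp

lemma denom_q0: "denom q0 = int n"
  unfolding q0_int by (rule denom_eq[OF npos]) (use cop in simp)

lemma q0_pos: "0 < q0" unfolding q0_def using m0 mlt by simp

lemma q0_half: "q0 < 1/2"
proof -
  have "int m * 2 < 1 * int n" using mn2 by simp
  then have "of_int (int m) / of_int (int n) < (of_int 1 / of_int 2 :: rat)"
    using rat_less_iff[OF npos, of 2 "int m" 1] by simp
  then show ?thesis unfolding q0_int by simp
qed

lemma lt_q0: assumes "b > 0" shows "(of_int a / of_int b < q0) \<longleftrightarrow> a * int n < int m * b"
  by (subst q0_int) (rule rat_less_iff[OF assms npos])

definition BLA :: "rat \<Rightarrow> bool" where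
  "BLA r \<longleftrightarrow> 0 \<le> r \<and> r < q0 \<and> denom r \<le> int n \<and>
     (\<forall>x. 0 \<le> x \<longrightarrow> x < q0 \<longrightarrow> denom x \<le> denom r \<longrightarrow> x \<le> r)"

definition recI :: "int \<Rightarrow> bool" where
  "recI v \<longleftrightarrow> 1 \<le> v \<and> v < int n \<and>
     (\<forall>w. 1 \<le> w \<longrightarrow> w < v \<longrightarrow> (v * int m) mod int n < (w * int m) mod int n)"

lemma DI: "int (D v) = (int v * int m) mod int n"
  unfolding D_def by (simp add: zmod_int)

lemma recI_recN: "recI (int v) \<longleftrightarrow> recN v"
proof
  assume "recI (int v)"
  then show "recN v" unfolding recN_def
  proof (intro conjI allI impI)
    assume r: "recI (int v)"
    show "1 \<le> v" "v < n" using r unfolding recI_def by auto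
    fix w :: nat assume w: "1 \<le> w" "w < v"
    then have "(int v * int m) mod int n < (int w * int m) mod int n" using r unfolding recI_def by auto
    then have "int (D v) < int (D w)" by (simp add: DI)
    then show "D v < D w" by simp
  qed
next
  assume r: "recN v"
  show "recI (int v)" unfolding recI_def
  proof (intro conjI allI impI)
    show "1 \<le> int v" "int v < int n" using r unfolding recN_def by auto
    fix w :: int assume w: "1 \<le> w" "w < int v"
    then have "D v < D (nat w)" using r unfolding recN_def by auto
    then have "int (D v) < int (D (nat w))" by simp
    then show "int v * int m mod int n < w * int m mod int n" using w by (simp add: DI)
  qed
qed

lemma ndvd: assumes "1 \<le> w" "w < int n" shows "\<not> int n dvd w * int m"
proof
  assume "int n dvd w * int m"
  moreover have "coprime (int n) (int m)" using cop' by simp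
  ultimately have "int n dvd w" using coprime_dvd_mult_left_iff by blast
  then show False using assms zdvd_imp_le by fastforce
qed

lemma BLA_rec: assumes "BLA r" shows "recI (denom r)"
proof -
  define u where "u = numr r"
  define v where "v = denom r"
  have r0: "0 \<le> r" and rq: "r < q0" and rn: "denom r \<le> int n"
    and best: "\<And>x. 0 \<le> x \<Longrightarrow> x < q0 \<Longrightarrow> denom x \<le> v \<Longrightarrow> x \<le> r"
    using assms unfolding BLA_def v_def by auto
  have vp: "v > 0" unfolding v_def by (rule denom_pos)
  have u0: "u \<ge> 0" unfolding u_def using r0 by (rule numr_nonneg)
  have rr: "r = of_int u / of_int v" unfolding u_def v_def by (rule rat_repr)
  have cuv: "coprime u v" unfolding u_def v_def by (rule coprime_nd)
  have vn: "v < int n"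
  proof (rule ccontr)
    assume "\<not> v < int n"
    then have vn': "v = int n" using rn v_def by simp
    have L: "0 \<le> LFP q0" "LFP q0 < q0" "denom (LFP q0) \<le> int n"
      using LFP_props[OF q0_pos] denom_q0 by auto
    have "LFP q0 \<le> r" using best[OF L(1,2)] L(3) vn' by simp
    moreover have "r \<le> LFP q0"
      using LFP_props(5)[OF q0_pos r0] rq q0_half rn denom_q0 by simp
    ultimately have "r = LFP q0" by simp
    then have "denom r < int n" using LFP_denom_less[OF q0_pos] q0_half denom_q0 by simp
    then show False using vn' v_def by simp
  qed
  have un: "u * int n < int m * v" using rq lt_q0[OF vp, of u] rr by simp
  define E where "E = v * int m - u * int n"
  have E0: "E > 0" using un unfolding E_def by (simp add: mult.commute)
  have En: "E < int n"
  proof -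
    have "\<not> (u + 1) * int n < int m * v"
    proof
      assume a: "(u + 1) * int n < int m * v"
      have "of_int (u+1) / of_int v < q0" using a by (simp only: lt_q0[OF vp])
      moreover have "0 \<le> (of_int (u+1) / of_int v :: rat)" using u0 vp by simp
      moreover have "denom (of_int (u+1) / of_int v) \<le> v" by (rule denom_le[OF vp])
      ultimately have "of_int (u+1) / of_int v \<le> r" using best by blast
      then have "(u+1) * v \<le> u * v" by (simp only: rr rat_le_iff[OF vp vp])
      then show False using vp by simp
    qed
    then have "E \<le> int n" unfolding E_def by (simp add: algebra_simps)
    moreover have "E \<noteq> int n"
    proof
      assume "E = int n"
      then have "v * int m = int n * (u + 1)" unfolding E_def by (simp add: algebra_simps)
      then have "int n dvd v * int m" by simp
      then show False using ndvd vp vn by simp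
    qed
    ultimately show ?thesis by simp
  qed
  have Emod: "(v * int m) mod int n = E"
  proof -
    have "v * int m = E + u * int n" unfolding E_def by simp
    then have "(v * int m) mod int n = (E + u * int n) mod int n" by simp
    also have "\<dots> = E mod int n" by simp
    also have "\<dots> = E" using E0 En by simp
    finally show ?thesis .
  qed
  have "E < (w * int m) mod int n" if w: "1 \<le> w" "w < v" for w
  proof (rule ccontr)
    assume "\<not> ?thesis"
    then have le: "(w * int m) mod int n \<le> E" by simp
    define Dw where "Dw = (w * int m) mod int n"
    define x where "x = (w * int m) div int n"
    have wm: "w * int m = x * int n + Dw" unfolding Dw_def x_def by simp
    have wp: "w > 0" using w by simp
    have Dw0: "Dw > 0"
    proof -
      have "Dw \<noteq> 0" using ndvd[of w] w vn unfolding Dw_def by (simp add: dvd_eq_mod_eq_0)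
      moreover have "Dw \<ge> 0" unfolding Dw_def using npos by simp
      ultimately show ?thesis by simp
    qed
    have x0: "x \<ge> 0" unfolding x_def using wp npos by (simp add: div_int_pos_iff)
    have "x * int n < int m * w" using wm Dw0 by (simp add: mult.commute)
    then have "of_int x / of_int w < q0" by (simp only: lt_q0[OF wp])
    moreover have "0 \<le> (of_int x / of_int w :: rat)" using x0 wp by simp
    moreover have "denom (of_int x / of_int w) \<le> v" using denom_le[OF wp, of x] w by simp
    ultimately have "of_int x / of_int w \<le> r" using best by blast
    then have xv: "x * v \<le> u * w" by (simp only: rr rat_le_iff[OF wp vp])
    show False
    proof (cases "Dw = E")
      case True
      then have "(v - w) * int m = int n * (u - x)" using wm unfolding E_def by (simp add: algebra_simps)
      then have "int n dvd (v - w) * int m" by simp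
      then show False using ndvd[of "v - w"] w vn by simp
    next
      case False
      then have DE: "Dw < E" using le Dw_def by simp
      have bp: "v - w > 0" using w by simp
      have "u * w \<le> u * v" using u0 w by (simp add: mult_left_mono)
      then have "x * v \<le> u * v" using xv by simp
      then have xu: "x \<le> u" using vp by simp
      have "(u - x) * int n < int m * (v - w)"
        using wm DE unfolding E_def by (simp add: algebra_simps)
      then have "of_int (u - x) / of_int (v - w) < q0" by (simp only: lt_q0[OF bp])
      moreover have "0 \<le> (of_int (u - x) / of_int (v - w) :: rat)" using xu bp by simp
      moreover have "denom (of_int (u - x) / of_int (v - w)) \<le> v" using denom_le[OF bp, of "u - x"] w by simp
      ultimately have "of_int (u - x) / of_int (v - w) \<le> r" using best by blast
      then have "(u - x) * v \<le> u * (v - w)" by (simp only: rr rat_le_iff[OF bp vp])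
      then have "u * w \<le> x * v" by (simp add: algebra_simps)
      then have "x * v = u * w" using xv by simp
      then have "v dvd u * w" by (metis dvd_triv_right)
      then have "v dvd w" using cuv by (metis coprime_commute coprime_dvd_mult_right_iff)
      then show False using w wp zdvd_imp_le by fastforce
    qed
  qed
  then show ?thesis unfolding recI_def v_def[symmetric] using vp vn Emod by auto
qed

end


context mn begin

lemma rec_BLA: assumes "recI v" shows "\<exists>r. BLA r \<and> denom r = v"
proof -
  have v1: "1 \<le> v" and vn: "v < int n"
    and rec: "\<And>w. 1 \<le> w \<Longrightarrow> w < v \<Longrightarrow> (v * int m) mod int n < (w * int m) mod int n"
    using assms unfolding recI_def by auto
  have vp: "v > 0" using v1 by simp
  define u where "u = (v * int m) div int n"
  define E where "E = (v * int m) mod int n"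
  have vm: "v * int m = u * int n + E" unfolding u_def E_def by simp
  have E0: "E > 0"
  proof -
    have "E \<noteq> 0" using ndvd[OF v1 vn] unfolding E_def by (simp add: dvd_eq_mod_eq_0)
    moreover have "E \<ge> 0" unfolding E_def using npos by simp
    ultimately show ?thesis by simp
  qed
  have u0: "u \<ge> 0" unfolding u_def using vp npos by (simp add: div_int_pos_iff)
  define r where "r = (of_int u / of_int v :: rat)"
  have r0: "0 \<le> r" unfolding r_def using u0 vp by simp
  have "u * int n < int m * v" using vm E0 by (simp add: mult.commute)
  then have rq: "r < q0" unfolding r_def by (simp only: lt_q0[OF vp])
  have key: "x < r" if x: "0 \<le> x" "x < q0" "denom x < v" for x
  proof -
    define a where "a = numr x"
    define b where "b = denom x"
    have bp: "b > 0" unfolding b_def by (rule denom_pos)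
    have a0: "a \<ge> 0" unfolding a_def using x(1) by (rule numr_nonneg)
    have xr: "x = of_int a / of_int b" unfolding a_def b_def by (rule rat_repr)
    have an: "a * int n < int m * b" using x(2) xr by (simp only: lt_q0[OF bp])
    define Db where "Db = (b * int m) mod int n"
    define c where "c = (b * int m) div int n"
    have bm: "b * int m = c * int n + Db" unfolding Db_def c_def by simp
    have "a = (a * int n) div int n" using npos by simp
    also have "\<dots> \<le> c" unfolding c_def using an npos by (intro zdiv_mono1) (auto simp: mult.commute)
    finally have ac: "a \<le> c" .
    have "Db > E" using rec[of b] bp x(3) b_def unfolding Db_def E_def by simp
    have "b * int m - a * int n = Db + (c - a) * int n" using bm by (simp add: algebra_simps)
    also have "\<dots> \<ge> Db" using ac npos by simp
    finally have ge: "b * int m - a * int n > E" using \<open>Db > E\<close> by simp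
    have "(b * int m - a * int n) * v > E * v" using ge vp by simp
    moreover have "E * v > E * b" using E0 x(3) b_def by simp
    ultimately have "(b * int m - a * int n) * v > E * b" by simp
    moreover have "E * b = (v * int m - u * int n) * b" using vm by simp
    ultimately have "u * int n * b > a * int n * v" by (simp add: algebra_simps)
    then have "int n * (a * v) < int n * (u * b)" by (simp add: algebra_simps)
    then have "a * v < u * b" using npos by simp
    then show "x < r" unfolding xr r_def by (simp only: rat_less_iff[OF bp vp])
  qed
  have dr: "denom r = v"
  proof -
    have "denom r \<le> v" unfolding r_def by (rule denom_le[OF vp])
    moreover have "\<not> denom r < v" using key[OF r0 rq] by auto
    ultimately show ?thesis by simp
  qed
  have "BLA r" unfolding BLA_def
  proof (intro conjI allI impI)
    show "0 \<le> r" "r < q0" by (fact r0, fact rq)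
    show "denom r \<le> int n" using dr vn by simp
    fix x assume x: "0 \<le> x" "x < q0" "denom x \<le> denom r"
    show "x \<le> r"
    proof (cases "denom x < v")
      case True then show ?thesis using key x by fastforce
    next
      case False
      then have bv: "denom x = v" using x dr by simp
      define a where "a = numr x"
      have xr: "x = of_int a / of_int v" unfolding a_def bv[symmetric] by (rule rat_repr)
      have an: "a * int n < int m * v" using x(2) xr by (simp only: lt_q0[OF vp])
      have "a = (a * int n) div int n" using npos by simp
      also have "\<dots> \<le> u" unfolding u_def using an npos by (intro zdiv_mono1) (auto simp: mult.commute)
      finally have "a \<le> u" .
      then have "a * v \<le> u * v" using vp by simp
      then show ?thesis unfolding xr r_def by (simp only: rat_le_iff[OF vp vp])
    qed
  qed
  then show ?thesis using dr by blast
qed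

end


context mn begin

lemma BLA_LFP: assumes "BLA y" "y \<noteq> 0" shows "BLA (LFP y)" "denom (LFP y) < denom y"
proof -
  have y0: "0 < y" and yq: "y < q0" and yn: "denom y \<le> int n"
    and yb: "\<And>x. 0 \<le> x \<Longrightarrow> x < q0 \<Longrightarrow> denom x \<le> denom y \<Longrightarrow> x \<le> y"
    using assms unfolding BLA_def by auto
  have yh: "y \<le> 1/2" using yq q0_half by simp
  show dl: "denom (LFP y) < denom y" by (rule LFP_denom_less[OF y0 yh])
  note L = LFP_props[OF y0]
  show "BLA (LFP y)" unfolding BLA_def
  proof (intro conjI allI impI)
    show "0 \<le> LFP y" by (rule L(1))
    show "LFP y < q0" using L(4) yq by simp
    show "denom (LFP y) \<le> int n" using dl yn by simp
    fix x assume x: "0 \<le> x" "x < q0" "denom x \<le> denom (LFP y)"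
    then have "x \<le> y" using yb dl by simp
    moreover have "x \<noteq> y" using x dl by auto
    ultimately have "x < y" by simp
    then show "x \<le> LFP y" using L(5)[OF x(1)] x q0_half dl by simp
  qed
qed

lemma BLA_LFP_q0: "BLA (LFP q0)"
proof -
  note L = LFP_props[OF q0_pos]
  show ?thesis unfolding BLA_def
  proof (intro conjI allI impI)
    show "0 \<le> LFP q0" "LFP q0 < q0" by (fact L(1), fact L(4))
    show "denom (LFP q0) \<le> int n" using L(3) denom_q0 by simp
    fix x assume x: "0 \<le> x" "x < q0" "denom x \<le> denom (LFP q0)"
    then show "x \<le> LFP q0" using L(5)[OF x(1)] L(3) q0_half by simp
  qed
qed

context
  fixes us assumes lfs: "is_LFS q0 us"
begin

lemma us_ne: "us \<noteq> []" and us_hd: "hd us = 0" and us_last: "last us = LFP q0"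
  and us_step: "\<And>i. Suc i < length us \<Longrightarrow> us ! i = LFP (us ! Suc i)"
  and us_tl: "0 \<notin> set (tl us)"
  using lfs unfolding is_LFS_def by auto

lemma us_nz: assumes "0 < i" "i < length us" shows "us ! i \<noteq> 0"
proof -
  have "tl us ! (i - 1) = us ! Suc (i - 1)" using assms by (intro nth_tl) simp
  moreover have "tl us ! (i - 1) \<in> set (tl us)" using assms by (intro nth_mem) simp
  ultimately show ?thesis using us_tl assms by auto
qed

lemma us_last_nth: "us ! (length us - 1) = LFP q0"
  using us_last us_ne by (simp add: last_conv_nth)

lemma us_BLA: "i < length us \<Longrightarrow> BLA (us ! i)"
proof -
  fix i
  have "\<forall>i. i + d = length us - 1 \<longrightarrow> BLA (us ! i)" for d
  proof (induction d)
    case 0 then show ?case using us_last_nth BLA_LFP_q0 by auto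
  next
    case (Suc d)
    show ?case
    proof (intro allI impI)
      fix i assume i: "i + Suc d = length us - 1"
      then have B: "BLA (us ! Suc i)" using Suc.IH by auto
      have "us ! Suc i \<noteq> 0" using us_nz[of "Suc i"] i by simp
      then have "BLA (LFP (us ! Suc i))" using BLA_LFP B by blast
      then show "BLA (us ! i)" using us_step[of i] i by simp
    qed
  qed
  note H = this
  assume "i < length us"
  then have "i + (length us - 1 - i) = length us - 1" by simp
  then show "BLA (us ! i)" using H by blast
qed

lemma us_denom_mono: "Suc i < length us \<Longrightarrow> denom (us ! i) < denom (us ! Suc i)"
proof -
  assume a: "Suc i < length us"
  have B: "BLA (us ! Suc i)" using us_BLA a by simp
  have nz: "us ! Suc i \<noteq> 0" using us_nz[of "Suc i"] a by simp
  show ?thesis using BLA_LFP(2)[OF B nz] us_step[OF a] by simp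
qed

lemma BLA_in_us: assumes "BLA r" shows "r \<in> set us"
proof -
  have r0: "0 \<le> r" and rq: "r < q0" and rn: "denom r \<le> int n"
    and br: "\<And>x. 0 \<le> x \<Longrightarrow> x < q0 \<Longrightarrow> denom x \<le> denom r \<Longrightarrow> x \<le> r"
    using assms unfolding BLA_def by auto
  have H: "\<forall>i. i + d = length us - 1 \<longrightarrow> us ! i \<le> r \<longrightarrow> r \<in> set us" for d
  proof (induction d)
    case 0
    show ?case
    proof (intro allI impI)
      fix i assume i: "i + 0 = length us - 1" "us ! i \<le> r"
      have "r \<le> LFP q0" using LFP_props(5)[OF q0_pos r0] rq q0_half rn denom_q0 by simp
      then have "us ! i = r" using i us_last_nth by simp
      moreover have "i < length us" using i us_ne by (cases us) auto
      ultimately show "r \<in> set us" by (metis nth_mem)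
    qed
  next
    case (Suc d)
    show ?case
    proof (intro allI impI)
      fix i assume i: "i + Suc d = length us - 1" "us ! i \<le> r"
      show "r \<in> set us"
      proof (cases "us ! Suc i \<le> r")
        case True
        have "Suc i + d = length us - 1" using i by simp
        then show ?thesis using Suc.IH True by blast
      next
        case False
        then have lt: "r < us ! Suc i" by simp
        have Bj: "BLA (us ! Suc i)" using us_BLA i by simp
        have nz: "us ! Suc i \<noteq> 0" using us_nz[of "Suc i"] i by simp
        have "\<not> denom (us ! Suc i) \<le> denom r"
        proof
          assume "denom (us ! Suc i) \<le> denom r"
          then have "us ! Suc i \<le> r" using br Bj unfolding BLA_def by auto
          then show False using lt by simp
        qed
        then have dl: "denom r \<le> denom (us ! Suc i)" by simp
        have yp: "0 < us ! Suc i" using Bj nz unfolding BLA_def by auto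
        have "r \<le> LFP (us ! Suc i)" using LFP_props(5)[OF yp r0] dl lt rq q0_half by simp
        then have "us ! i = r" using us_step[of i] i by simp
        moreover have "i < length us" using i by simp
        ultimately show "r \<in> set us" by (metis nth_mem)
      qed
    qed
  qed
  have "us ! 0 = 0" using us_hd us_ne by (simp add: hd_conv_nth)
  then show ?thesis using H[of "length us - 1"] r0 by simp
qed

end
end


lemma sorted_wrt_filter_gen:
  "sorted_wrt (\<lambda>a b. P a \<longrightarrow> P b \<longrightarrow> R a b) xs \<Longrightarrow> sorted_wrt R (filter P xs)"
  by (induction xs) auto

theorem lemma2p21:
  fixes m n :: nat and us :: "rat list"
  assumes "0 < m" and "2 * m < n" and "coprime m n"
    and "is_LFS (of_nat m / of_nat n) us"
  shows "card (adm_set m n) = length us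
    \<and> (\<forall>i < length us.
          int (card (orb m n (sorted_list_of_set (adm_set m n) ! i) 0)) = denom (us ! i))
    \<and> sorted_wrt (>) (filter (\<lambda>x. x \<in> adm_set m n) (orb_list m n m 0))"
proof -
  interpret mn m n using assms(1-3) by unfold_locales
  have lfs: "is_LFS q0 us" using assms(4) unfolding q0_def .
  define S where "S = adm_set m n"
  define ks where "ks = sorted_list_of_set S"
  define f where "f = (\<lambda>k. int (Kf k + 1))"
  have finS: "finite S" unfolding S_def by (rule adm_finite)
  have setks: "set ks = S" unfolding ks_def using finS by simp
  have lenks: "length ks = card S" unfolding ks_def by simp
  have set_us: "denom ` set us = int ` {v. recN v}"
  proof
    show "denom ` set us \<subseteq> int ` {v. recN v}"
    proof
      fix d assume "d \<in> denom ` set us"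
      then obtain r where r: "r \<in> set us" "d = denom r" by blast
      then obtain i where i: "i < length us" "r = us ! i" by (metis in_set_conv_nth)
      have "recI (denom r)" using BLA_rec us_BLA[OF lfs i(1)] i by simp
      moreover have "denom r = int (nat (denom r))" using denom_pos[of r] by simp
      ultimately have "recN (nat (denom r))" using recI_recN by metis
      then show "d \<in> int ` {v. recN v}" using r \<open>denom r = int (nat (denom r))\<close> by blast
    qed
    show "int ` {v. recN v} \<subseteq> denom ` set us"
    proof
      fix d assume "d \<in> int ` {v. recN v}"
      then obtain v where v: "recN v" "d = int v" by blast
      then have "recI (int v)" using recI_recN by simp
      then obtain r where r: "BLA r" "denom r = int v" using rec_BLA by blast
      then have "r \<in> set us" using BLA_in_us[OF lfs] by simp
      then show "d \<in> denom ` set us" using r v by force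
    qed
  qed
  have sd: "sorted_wrt (<) (map denom us)"
    unfolding sorted_wrt_iff_nth_Suc_transp[OF transp_on_less]
    using us_denom_mono[OF lfs] by simp
  have sk: "sorted_wrt (<) (map f ks)"
  proof -
    have "sorted_wrt (<) ks" unfolding ks_def by (rule strict_sorted_list_of_set)
    then have "sorted_wrt (\<lambda>x y. f x < f y) ks"
      by (rule sorted_wrt_mono_rel[rotated]) (use Kmono setks S_def f_def in auto)
    then show ?thesis by (simp add: sorted_wrt_map)
  qed
  have setk: "set (map f ks) = int ` {v. recN v}"
  proof -
    have "set (map f ks) = f ` S" using setks by simp
    also have "f ` S = int ` ((\<lambda>k. Kf k + 1) ` S)" unfolding f_def image_image by simp
    finally have "set (map f ks) = int ` ((\<lambda>k. Kf k + 1) ` S)" .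
    then show ?thesis using adm_image S_def by simp
  qed
  have eq: "map f ks = map denom us"
    using strict_sorted_equal[OF sd sk] setk set_us by simp
  then have len: "length us = card S" using lenks by (metis length_map)
  have part2: "\<forall>i < length us. int (card (orb m n (ks ! i) 0)) = denom (us ! i)"
  proof (intro allI impI)
    fix i assume i: "i < length us"
    then have "i < length ks" using len lenks by simp
    then have "(map f ks) ! i = f (ks ! i)" by simp
    moreover have "(map denom us) ! i = denom (us ! i)" using i by simp
    ultimately have "f (ks ! i) = denom (us ! i)" using eq by simp
    then show "int (card (orb m n (ks ! i) 0)) = denom (us ! i)" unfolding f_def card_orb by simp
  qed
  have Km: "Kf m = n - 1"
  proof (rule Kf_unique)
    show "n - 1 < n" using mlt by simp
    have "m + (n - 1) * m = n * m" using mlt by (cases n) auto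
    then show "(m + (n - 1) * m) mod n = 0" by simp
  qed
  define e where "e = (\<lambda>j. (m + j * m) mod n)"
  have Ke: "Kf (e j) = n - 1 - j" if "j < n" for j
  proof (rule Kf_unique)
    show "n - 1 - j < n" using that by simp
    have "(e j + (n - 1 - j) * m) mod n = (m + j * m + (n - 1 - j) * m) mod n"
      unfolding e_def by (simp add: mod_add_left_eq)
    also have "m + j * m + (n - 1 - j) * m = n * m"
    proof -
      have "m + j * m + (n - 1 - j) * m = (1 + j + (n - 1 - j)) * m" by (simp add: algebra_simps)
      also have "1 + j + (n - 1 - j) = n" using that by simp
      finally show ?thesis by simp
    qed
    finally show "(e j + (n - 1 - j) * m) mod n = 0" by simp
  qed
  have ol: "orb_list m n m 0 = map e [0..<n]"
    unfolding orb_list_def e_def Kf_def[symmetric] Km using mlt by simp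
  have part3: "sorted_wrt (>) (filter (\<lambda>x. x \<in> S) (orb_list m n m 0))"
  proof (rule sorted_wrt_filter_gen)
    show "sorted_wrt (\<lambda>a b. a \<in> S \<longrightarrow> b \<in> S \<longrightarrow> b < a) (orb_list m n m 0)"
      unfolding sorted_wrt_iff_nth_less
    proof (intro allI impI)
      fix i j assume ij: "i < j" "j < length (orb_list m n m 0)" 
        "orb_list m n m 0 ! i \<in> S" "orb_list m n m 0 ! j \<in> S"
      have jn: "j < n" using ij unfolding ol by simp
      have ei: "orb_list m n m 0 ! i = e i" "orb_list m n m 0 ! j = e j"
        unfolding ol using ij jn by auto
      have K1: "Kf (e i) = n - 1 - i" "Kf (e j) = n - 1 - j" using Ke ij jn by auto
      have Kne: "Kf (e j) < Kf (e i)" using K1 ij jn by simp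
      show "orb_list m n m 0 ! j < orb_list m n m 0 ! i"
      proof (rule ccontr)
        assume "\<not> ?thesis"
        then have "e i \<le> e j" using ei by simp
        moreover have "e i \<noteq> e j" using Kne by auto
        ultimately have "e i < e j" by simp
        then have "Kf (e i) < Kf (e j)" using Kmono ij ei S_def by simp
        then show False using Kne by simp
      qed
    qed
  qed
  show ?thesis using len part2 part3 unfolding S_def ks_def by simp
qed


end
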